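(* Let $\mathbb F_q$ be a finite field, and let $B_1 \subseteq \mathbb F_q^{m_1}$ and $B_2 \subseteq \mathbb F_q^{m_2}$. Suppose $B_1$ is $C_1$-weakly Sidorenko and $B_2$ is $C_2$-weakly Sidorenko. Then $B_1 \times B_2 := \{(x,y) \in \mathbb F_q^{m_1+m_2} : x \in B_1, y \in B_2\}$ is $C_1C_2$-weakly Sidorenko. In particular, if $B_1$ and $B_2$ are both Sidorenko, then so is $B_1 \times B_2$.
   Context: An affine relation on elements $x_1,\ldots,x_k$ of $\mathbb F_q^n$ is an equation $\sum_i \lambda_i x_i = 0$ with $\lambda_i \in \mathbb F_q$ and $\sum_i \lambda_i = 0$; it is nontrivial if some $\lambda_i \neq 0$. A set is affinely independent if it has no nontrivial affine relation; the affine rank $\mathrm{rank}_{\mathrm{aff}}(B)$ of $B \subseteq \mathbb F_q^m$ is the size of a maximal affinely independent subset of $B$. For $B \subseteq \mathbb F_q^m$ and $A \subseteq \mathbb F_q^n$, an affine homomorphism $B \to A$ is a map $\varphi: B \to A$ that extends to an affine map $\mathbb F_q^m \to \mathbb F_q^n$ (equivalently, preserves all affine relations); $\mathrm{hom}_{\mathrm{aff}}(B,A)$ denotes the number of affine homomorphisms $B \to A$. For a real $C$, $B \subseteq \mathbb F_q^m$ is called $C$-weakly Sidorenko if for every $n$ and every $A \subseteq \mathbb F_q^n$ with $|A| = \alpha N$, where $N = q^n$, we have $\mathrm{hom}_{\mathrm{aff}}(B,A) \geq \alpha^C N^{\mathrm{rank}_{\mathrm{aff}}(B)}$. $B$ is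 called Sidorenko if it is $|B|$-weakly Sidorenko. *)

theory Defs
  imports Complex_Main "HOL-Library.FuncSet"
begin

text \<open>Vectors in F_q^n are represented as functions nat => 'a vanishing from index n on.\<close>
definition vecs :: "nat \<Rightarrow> (nat \<Rightarrow> 'a::field) set" where
  "vecs n = {x. \<forall>i\<ge>n. x i = 0}"

definition aff_indep :: "(nat \<Rightarrow> 'a::field) set \<Rightarrow> bool" where
  "aff_indep S \<longleftrightarrow> finite S \<and>
     (\<forall>l :: (nat \<Rightarrow> 'a) \<Rightarrow> 'a.
        (\<Sum>x\<in>S. l x) = 0 \<and> (\<forall>i. (\<Sum>x\<in>S. l x * x i) = 0) \<longrightarrow> (\<forall>x\<in>S. l x = 0))"

text \<open>Affine rank: size of a maximal (= maximum-size, all maximal ones have equal size)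
  affinely independent subset.\<close>
definition rank_aff :: "(nat \<Rightarrow> 'a::field) set \<Rightarrow> nat" where
  "rank_aff B = Max (card ` {S. S \<subseteq> B \<and> aff_indep S})"

definition affine_map :: "nat \<Rightarrow> nat \<Rightarrow> ((nat \<Rightarrow> 'a::field) \<Rightarrow> (nat \<Rightarrow> 'a)) \<Rightarrow> bool" where
  "affine_map m n f \<longleftrightarrow> (\<exists>c v. c \<in> vecs n \<and> (\<forall>i<m. v i \<in> vecs n) \<and>
      (\<forall>x\<in>vecs m. f x = (\<lambda>j. c j + (\<Sum>i<m. x i * v i j))))"

definition hom_aff :: "nat \<Rightarrow> nat \<Rightarrow> (nat \<Rightarrow> 'a::field) set \<Rightarrow> (nat \<Rightarrow> 'a) set \<Rightarrow> nat" where
  "hom_aff m n B A = card {\<phi> \<in> B \<rightarrow>\<^sub>E A. \<exists>f. affine_map m n f \<and> (\<forall>x\<in>B. \<phi> x = f x)}"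

definition weakly_sidorenko :: "real \<Rightarrow> nat \<Rightarrow> (nat \<Rightarrow> 'a::{finite,field}) set \<Rightarrow> bool" where
  "weakly_sidorenko C m B \<longleftrightarrow>
     (\<forall>n (A :: (nat \<Rightarrow> 'a) set). A \<subseteq> vecs n \<longrightarrow>
        (let N = real (card (UNIV :: 'a set)) ^ n; \<alpha> = real (card A) / N in
         real (hom_aff m n B A) \<ge> \<alpha> powr C * N ^ rank_aff B))"

definition sidorenko :: "nat \<Rightarrow> (nat \<Rightarrow> 'a::{finite,field}) set \<Rightarrow> bool" where
  "sidorenko m B \<longleftrightarrow> weakly_sidorenko (real (card B)) m B"

definition prod_set :: "nat \<Rightarrow> (nat \<Rightarrow> 'a::field) set \<Rightarrow> (nat \<Rightarrow> 'a) set \<Rightarrow> (nat \<Rightarrow> 'a) set" where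
  "prod_set m1 B1 B2 = (\<lambda>(x, y). (\<lambda>i. if i < m1 then x i else y (i - m1))) ` (B1 \<times> B2)"

end

theory Submission
  imports Defs "HOL-Analysis.Convex"
begin

definition aff :: "(nat \<Rightarrow> 'a::field) \<Rightarrow> (nat \<Rightarrow> nat \<Rightarrow> 'a) \<Rightarrow> nat \<Rightarrow> (nat \<Rightarrow> 'a) \<Rightarrow> (nat \<Rightarrow> 'a)" where
  "aff c v m x = (\<lambda>j. c j + (\<Sum>i<m. x i * v i j))"

definition valid :: "nat \<Rightarrow> nat \<Rightarrow> (nat \<Rightarrow> 'a::field) \<Rightarrow> (nat \<Rightarrow> nat \<Rightarrow> 'a) \<Rightarrow> bool" where
  "valid n m c v \<longleftrightarrow> c \<in> vecs n \<and> (\<forall>i<m. v i \<in> vecs n)"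

definition homset :: "nat \<Rightarrow> nat \<Rightarrow> (nat \<Rightarrow> 'a::field) set \<Rightarrow> (nat \<Rightarrow> 'a) set \<Rightarrow> ((nat \<Rightarrow> 'a) \<Rightarrow> (nat \<Rightarrow> 'a)) set" where
  "homset m n B A = {\<phi> \<in> B \<rightarrow>\<^sub>E A. \<exists>c v. valid n m c v \<and> (\<forall>x\<in>B. \<phi> x = aff c v m x)}"

lemma hom_aff_eq:
  assumes "B \<subseteq> vecs m"
  shows "hom_aff m n B A = card (homset m n B A)"
proof -
  have "{\<phi> \<in> B \<rightarrow>\<^sub>E A. \<exists>f. affine_map m n f \<and> (\<forall>x\<in>B. \<phi> x = f x)} = homset m n B A"
    unfolding homset_def
  proof (rule Collect_cong, rule conj_cong[OF refl], rule iffI)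
    fix \<phi> assume "\<exists>f. affine_map m n f \<and> (\<forall>x\<in>B. \<phi> x = f x)"
    then obtain f c v where h: "valid n m c v" "\<forall>x\<in>vecs m. f x = aff c v m x" "\<forall>x\<in>B. \<phi> x = f x"
      unfolding affine_map_def valid_def aff_def by blast
    have "\<forall>x\<in>B. \<phi> x = aff c v m x"
    proof
      fix x assume "x \<in> B"
      then show "\<phi> x = aff c v m x" using h(2,3) assms by (simp add: subset_iff)
    qed
    then show "\<exists>c v. valid n m c v \<and> (\<forall>x\<in>B. \<phi> x = aff c v m x)" using h(1) by blast
  next
    fix \<phi> assume "\<exists>c v. valid n m c v \<and> (\<forall>x\<in>B. \<phi> x = aff c v m x)"
    then obtain c v where "valid n m c v" "\<forall>x\<in>B. \<phi> x = aff c v m x" by blast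
    then show "\<exists>f. affine_map m n f \<and> (\<forall>x\<in>B. \<phi> x = f x)"
      unfolding affine_map_def valid_def aff_def by (intro exI[of _ "aff c v m"]) (auto simp: aff_def)
  qed
  then show ?thesis unfolding hom_aff_def homset_def by simp
qed

lemma vecs_bij: "bij_betw (\<lambda>x. restrict x {..<n}) (vecs n) ({..<n} \<rightarrow>\<^sub>E (UNIV::'a::field set))"
proof (rule bij_betw_byWitness[where f'="\<lambda>f i. if i < n then f i else 0"])
  show "\<forall>a\<in>vecs n. (\<lambda>i. if i < n then restrict a {..<n} i else 0) = a"
    by (auto simp: vecs_def fun_eq_iff)
  show "\<forall>a'\<in>{..<n} \<rightarrow>\<^sub>E UNIV. restrict (\<lambda>i. if i < n then a' i else (0::'a)) {..<n} = a'"
    by (auto simp: fun_eq_iff PiE_def extensional_def)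
  show "(\<lambda>x. restrict x {..<n}) ` vecs n \<subseteq> {..<n} \<rightarrow>\<^sub>E UNIV"
    by (rule image_subsetI, subst restrict_PiE_iff, blast)
  show "(\<lambda>f i. if i < n then f i else 0) ` ({..<n} \<rightarrow>\<^sub>E UNIV) \<subseteq> vecs n"
    by (rule image_subsetI) (simp add: vecs_def)
qed

lemma finite_vecs: "finite (vecs n :: (nat \<Rightarrow> 'a::{finite,field}) set)"
  using bij_betw_finite[OF vecs_bij[where 'a='a, of n]] by (simp add: finite_PiE)

lemma card_vecs: "card (vecs n :: (nat \<Rightarrow> 'a::{finite,field}) set) = card (UNIV::'a set) ^ n"
  using bij_betw_same_card[OF vecs_bij[where 'a='a, of n]] by (simp add: card_PiE)

lemma card_ge2: "card (UNIV::'a::{finite,field} set) \<ge> 2"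
proof -
  have "{0::'a, 1} \<subseteq> UNIV" by simp
  then have "card {0::'a,1} \<le> card (UNIV::'a set)" by (rule card_mono[OF finite_UNIV])
  then show ?thesis by simp
qed

lemma finite_homset: "finite B \<Longrightarrow> finite A \<Longrightarrow> finite (homset m n B A)"
proof -
  assume "finite B" "finite A"
  then have "finite (B \<rightarrow>\<^sub>E A)" by (rule finite_PiE)
  then show ?thesis unfolding homset_def by (rule finite_subset[rotated]) auto
qed


definition inV :: "(nat \<Rightarrow> 'a::field) set \<Rightarrow> 'a \<Rightarrow> (nat \<Rightarrow> 'a) \<Rightarrow> bool" where
  "inV W a z \<longleftrightarrow> (\<exists>c. (\<Sum>w\<in>W. c w) = a \<and> (\<forall>i. (\<Sum>w\<in>W. c w * w i) = z i))"

lemma inV_zero: "inV W 0 (\<lambda>i. 0)"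
  unfolding inV_def by (intro exI[of _ "\<lambda>w. 0"]) simp

lemma inV_add: "inV W a z \<Longrightarrow> inV W b u \<Longrightarrow> inV W (a + b) (\<lambda>i. z i + u i)"
  unfolding inV_def
proof (elim exE conjE)
  fix c d assume "(\<Sum>w\<in>W. c w) = a" "\<forall>i. (\<Sum>w\<in>W. c w * w i) = z i"
    "(\<Sum>w\<in>W. d w) = b" "\<forall>i. (\<Sum>w\<in>W. d w * w i) = u i"
  then show "\<exists>e. (\<Sum>w\<in>W. e w) = a + b \<and> (\<forall>i. (\<Sum>w\<in>W. e w * w i) = z i + u i)"
    by (intro exI[of _ "\<lambda>w. c w + d w"]) (simp add: sum.distrib distrib_right)
qed

lemma inV_scale: "inV W a z \<Longrightarrow> inV W (k * a) (\<lambda>i. k * z i)"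
  unfolding inV_def
proof (elim exE conjE)
  fix c assume "(\<Sum>w\<in>W. c w) = a" "\<forall>i. (\<Sum>w\<in>W. c w * w i) = z i"
  then show "\<exists>e. (\<Sum>w\<in>W. e w) = k * a \<and> (\<forall>i. (\<Sum>w\<in>W. e w * w i) = k * z i)"
    by (intro exI[of _ "\<lambda>w. k * c w"]) (simp add: sum_distrib_left[symmetric] mult.assoc)
qed

lemma inV_sum:
  assumes "finite S" "\<And>s. s \<in> S \<Longrightarrow> inV W (f s) (g s)"
  shows "inV W (\<Sum>s\<in>S. f s) (\<lambda>i. \<Sum>s\<in>S. g s i)"
  using assms
proof (induction S rule: finite_induct)
  case empty
  then show ?case using inV_zero by simp
next
  case (insert x F)
  then have "inV W (f x + (\<Sum>s\<in>F. f s)) (\<lambda>i. g x i + (\<Sum>s\<in>F. g s i))"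
    by (intro inV_add) auto
  then show ?case using insert by simp
qed

lemma inV_gen: 
  assumes "finite W" "w \<in> W" shows "inV W 1 w"
  unfolding inV_def
proof (intro exI[of _ "\<lambda>u. if u = w then 1 else 0"] conjI allI)
  show "(\<Sum>u\<in>W. if u = w then 1 else 0) = (1::'a)" using assms by simp
  fix i
  have "\<And>u. (if u = w then 1 else 0) * u i = (if u = w then w i else 0)" by simp
  then show "(\<Sum>u\<in>W. (if u = w then 1 else 0) * u i) = w i" using assms by simp
qed

lemma aff_indepD:
  assumes "aff_indep S" "(\<Sum>x\<in>S. l x) = 0" "\<forall>i. (\<Sum>x\<in>S. l x * x i) = 0" "y \<in> S"
  shows "l y = 0"
  using assms unfolding aff_indep_def by blast

lemma aff_indep_finite: "aff_indep S \<Longrightarrow> finite S"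
  unfolding aff_indep_def by blast

lemma not_aff_indepE:
  assumes "finite S" "\<not> aff_indep S"
  obtains l y where "(\<Sum>x\<in>S. l x) = 0" "\<forall>i. (\<Sum>x\<in>S. l x * x i) = 0" "y \<in> S" "l y \<noteq> 0"
proof -
  have "\<exists>l. (\<Sum>x\<in>S. l x) = 0 \<and> (\<forall>i. (\<Sum>x\<in>S. l x * x i) = 0) \<and> \<not> (\<forall>x\<in>S. l x = 0)"
    using assms unfolding aff_indep_def by blast
  then show ?thesis using that by blast
qed

lemma indep_card_le:
  fixes W T :: "(nat \<Rightarrow> 'a::{finite,field}) set"
  assumes W: "finite W" and T: "aff_indep T" and inT: "\<And>t. t \<in> T \<Longrightarrow> inV W 1 t"
  shows "card T \<le> card W"
proof -
  have fT: "finite T" using T by (rule aff_indep_finite)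
  define F where "F = (\<lambda>d::(nat \<Rightarrow> 'a) \<Rightarrow> 'a. ((\<Sum>t\<in>T. d t), (\<lambda>i. \<Sum>t\<in>T. d t * t i)))"
  define G where "G = (\<lambda>d::(nat \<Rightarrow> 'a) \<Rightarrow> 'a. ((\<Sum>t\<in>W. d t), (\<lambda>i. \<Sum>t\<in>W. d t * t i)))"
  have inj: "inj_on F (T \<rightarrow>\<^sub>E UNIV)"
  proof (rule inj_onI)
    fix d d' assume d: "d \<in> T \<rightarrow>\<^sub>E UNIV" and d': "d' \<in> T \<rightarrow>\<^sub>E UNIV" and eq: "F d = F d'"
    define l where "l = (\<lambda>t. d t - d' t)"
    have "(\<Sum>t\<in>T. l t) = 0" using eq by (simp add: F_def l_def sum_subtractf)
    moreover have "\<forall>i. (\<Sum>t\<in>T. l t * t i) = 0"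
    proof
      fix i
      have "(\<Sum>t\<in>T. d t * t i) = (\<Sum>t\<in>T. d' t * t i)" using eq by (simp add: F_def fun_eq_iff)
      then show "(\<Sum>t\<in>T. l t * t i) = 0" by (simp add: l_def left_diff_distrib sum_subtractf)
    qed
    ultimately have "\<forall>t\<in>T. l t = 0" using T aff_indepD by blast
    then have "\<forall>t\<in>T. d t = d' t" by (simp add: l_def)
    then show "d = d'" using d d' by (metis PiE_ext)
  qed
  have sub: "F ` (T \<rightarrow>\<^sub>E UNIV) \<subseteq> G ` (W \<rightarrow>\<^sub>E UNIV)"
  proof
    fix p assume "p \<in> F ` (T \<rightarrow>\<^sub>E UNIV)"
    then obtain d where p: "p = F d" by blast
    have "inV W (\<Sum>t\<in>T. d t * 1) (\<lambda>i. \<Sum>t\<in>T. d t * t i)"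
      using fT by (intro inV_sum inV_scale inT)
    then obtain c where c: "(\<Sum>w\<in>W. c w) = (\<Sum>t\<in>T. d t)" "\<forall>i. (\<Sum>w\<in>W. c w * w i) = (\<Sum>t\<in>T. d t * t i)"
      unfolding inV_def by auto
    have "G (restrict c W) = G c" unfolding G_def by simp
    also have "G c = p" using c by (simp add: G_def F_def p fun_eq_iff)
    moreover have "restrict c W \<in> W \<rightarrow>\<^sub>E UNIV" by simp
    ultimately show "p \<in> G ` (W \<rightarrow>\<^sub>E UNIV)" by (metis image_eqI)
  qed
  have "card (T \<rightarrow>\<^sub>E (UNIV::'a set)) = card (F ` (T \<rightarrow>\<^sub>E UNIV))" using card_image[OF inj] by simp
  also have "\<dots> \<le> card (G ` (W \<rightarrow>\<^sub>E UNIV))"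
    by (rule card_mono[OF _ sub]) (simp add: W finite_PiE)
  also have "\<dots> \<le> card (W \<rightarrow>\<^sub>E (UNIV::'a set))" by (rule card_image_le) (simp add: W finite_PiE)
  finally have "card (UNIV::'a set) ^ card T \<le> card (UNIV::'a set) ^ card W"
    using fT W by (simp add: card_PiE)
  moreover have "1 < card (UNIV::'a set)" using card_ge2[where 'a='a] by simp
  ultimately show ?thesis by (rule power_le_imp_le_exp[rotated])
qed

lemma rank_basis:
  fixes B :: "(nat \<Rightarrow> 'a::field) set"
  assumes fB: "finite B"
  shows "\<exists>S. S \<subseteq> B \<and> aff_indep S \<and> card S = rank_aff B \<and> (\<forall>x\<in>B. inV S 1 x)"
proof -
  define K where "K = card ` {S. S \<subseteq> B \<and> aff_indep S}"
  have e: "aff_indep ({}::(nat \<Rightarrow> 'a) set)" unfolding aff_indep_def by simp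
  have fK: "finite K" unfolding K_def using fB by (intro finite_imageI) (auto intro: finite_subset[of _ "Pow B"])
  have neK: "K \<noteq> {}" unfolding K_def using e by blast
  have "rank_aff B \<in> K" unfolding rank_aff_def K_def[symmetric] using fK neK by (rule Max_in)
  then obtain S where S: "S \<subseteq> B" "aff_indep S" "card S = rank_aff B" unfolding K_def by (auto simp only: image_iff mem_Collect_eq)
  have fS: "finite S" using S(2) by (rule aff_indep_finite)
  have "inV S 1 x" if x: "x \<in> B" for x
  proof (cases "x \<in> S")
    case True
    then show ?thesis using fS inV_gen by blast
  next
    case False
    have "\<not> aff_indep (insert x S)"
    proof
      assume "aff_indep (insert x S)"
      then have "card (insert x S) \<in> K" unfolding K_def using S x by blast
      then have "card (insert x S) \<le> rank_aff B" unfolding rank_aff_def K_def[symmetric] using fK by simp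
      then show False using S(3) False fS by simp
    qed
    then obtain l where l: "(\<Sum>y\<in>insert x S. l y) = 0" "\<forall>i. (\<Sum>y\<in>insert x S. l y * y i) = 0"
      "\<exists>y\<in>insert x S. l y \<noteq> 0"
    proof -
      have "finite (insert x S)" using fS by simp
      from not_aff_indepE[OF this \<open>\<not> aff_indep (insert x S)\<close>] show ?thesis using that by blast
    qed
    have l1: "l x + (\<Sum>y\<in>S. l y) = 0" using l(1) fS False by simp
    have l2: "\<And>i. l x * x i + (\<Sum>y\<in>S. l y * y i) = 0" using l(2) fS False by simp
    have lx: "l x \<noteq> 0"
    proof
      assume lx0: "l x = 0"
      then have "(\<Sum>y\<in>S. l y) = 0" "\<forall>i. (\<Sum>y\<in>S. l y * y i) = 0" using l1 l2 by auto
      then have "\<forall>y\<in>S. l y = 0" using S(2) aff_indepD by blast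
      then show False using l(3) lx0 by auto
    qed
    show ?thesis unfolding inV_def
    proof (intro exI[of _ "\<lambda>y. - l y / l x"] conjI allI)
      have s1: "(\<Sum>y\<in>S. l y) = - l x" using l1 by (simp add: eq_neg_iff_add_eq_0 add.commute)
      have "(\<Sum>y\<in>S. - l y / l x) = - (\<Sum>y\<in>S. l y) / l x"
        by (simp add: sum_negf sum_divide_distrib)
      then show "(\<Sum>y\<in>S. - l y / l x) = 1" using s1 lx by simp
      fix i
      have "(\<Sum>y\<in>S. - l y / l x * y i) = - (\<Sum>y\<in>S. l y * y i) / l x"
        by (simp add: sum_negf sum_divide_distrib)
      also have "\<dots> = x i"
      proof -
        have "(\<Sum>y\<in>S. l y * y i) = - (l x * x i)" using l2[of i] by (simp add: eq_neg_iff_add_eq_0 add.commute)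
        then show ?thesis using lx by simp
      qed
      finally show "(\<Sum>y\<in>S. - l y / l x * y i) = x i" .
    qed
  qed
  then show ?thesis using S by blast
qed

lemma rank_le:
  fixes B :: "(nat \<Rightarrow> 'a::field) set"
  assumes fB: "finite B" and k: "\<And>T. T \<subseteq> B \<Longrightarrow> aff_indep T \<Longrightarrow> card T \<le> k"
  shows "rank_aff B \<le> k"
proof -
  define K where "K = card ` {S. S \<subseteq> B \<and> aff_indep S}"
  have e: "aff_indep ({}::(nat \<Rightarrow> 'a) set)" unfolding aff_indep_def by simp
  have fK: "finite K" unfolding K_def using fB by (intro finite_imageI) (auto intro: finite_subset[of _ "Pow B"])
  have neK: "K \<noteq> {}" unfolding K_def using e by blast
  show ?thesis unfolding rank_aff_def K_def[symmetric] using fK neK k by (auto simp: K_def)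
qed

lemma rank_ge1:
  fixes B :: "(nat \<Rightarrow> 'a::field) set"
  assumes fB: "finite B" and b: "b \<in> B"
  shows "rank_aff B \<ge> 1"
proof -
  define K where "K = card ` {S. S \<subseteq> B \<and> aff_indep S}"
  have e: "aff_indep {b}" unfolding aff_indep_def by simp
  have fK: "finite K" unfolding K_def using fB by (intro finite_imageI) (auto intro: finite_subset[of _ "Pow B"])
  have "1 \<in> K" unfolding K_def using e b by (intro image_eqI[of _ _ "{b}"]) auto
  then show ?thesis unfolding rank_aff_def K_def[symmetric] using fK by (meson Max_ge)
qed

lemma rank_empty: "rank_aff ({}::(nat \<Rightarrow> 'a::field) set) = 0"
proof -
  have "{S. S \<subseteq> ({}::(nat \<Rightarrow> 'a) set) \<and> aff_indep S} = {{}}" unfolding aff_indep_def by auto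
  then show ?thesis unfolding rank_aff_def by simp
qed


definition join :: "nat \<Rightarrow> (nat \<Rightarrow> 'a) \<Rightarrow> (nat \<Rightarrow> 'a) \<Rightarrow> (nat \<Rightarrow> 'a)" where
  "join m1 x y = (\<lambda>i. if i < m1 then x i else y (i - m1))"

lemma prod_set_eq: "prod_set m1 B1 B2 = (\<lambda>(x,y). join m1 x y) ` (B1 \<times> B2)"
  unfolding prod_set_def join_def by simp

lemma vecs_diff: "a \<in> vecs n \<Longrightarrow> b \<in> vecs n \<Longrightarrow> (\<lambda>j. a j - b j) \<in> vecs n"
  unfolding vecs_def by simp
lemma vecs_add: "a \<in> vecs n \<Longrightarrow> b \<in> vecs n \<Longrightarrow> (\<lambda>j. a j + b j) \<in> vecs n"
  unfolding vecs_def by simp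
lemma vecs_zero: "(\<lambda>j. 0) \<in> vecs n"
  unfolding vecs_def by simp
lemma vecs_D: "a \<in> vecs n \<Longrightarrow> n \<le> j \<Longrightarrow> a j = 0"
  unfolding vecs_def by simp

lemma aff_add_const: "aff (\<lambda>j. a j + c j) v m x = (\<lambda>j. a j + aff c v m x j)"
  unfolding aff_def by (simp add: add.assoc)
lemma aff_diff_const: "aff (\<lambda>j. c j - a j) v m x = (\<lambda>j. aff c v m x j - a j)"
  unfolding aff_def by (simp add: algebra_simps)

lemma sum_split_add: "(\<Sum>i<(m1::nat) + (m2::nat). f i) = (\<Sum>i<m1. f i) + (\<Sum>i<m2. f (m1 + i))"
  by (induction m2) (simp_all add: add.assoc)

lemma aff_join:
  "aff c v (m1 + m2) (join m1 x y) = (\<lambda>j. c j + (\<Sum>i<m1. x i * v i j) + (\<Sum>i<m2. y i * v (m1 + i) j))"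
proof -
  have "(\<Sum>i<m1. join m1 x y i * v i j) = (\<Sum>i<m1. x i * v i j)" for j
    by (rule sum.cong) (simp_all add: join_def)
  moreover have "(\<Sum>i<m2. join m1 x y (m1 + i) * v (m1 + i) j) = (\<Sum>i<m2. y i * v (m1 + i) j)" for j
    by (rule sum.cong) (simp_all add: join_def)
  ultimately show ?thesis unfolding aff_def by (simp add: sum_split_add add.assoc)
qed

locale prodctx =
  fixes m1 m2 n :: nat and B1 B2 A :: "(nat \<Rightarrow> 'a::{finite,field}) set" and x0 y0 :: "nat \<Rightarrow> 'a"
  assumes B1: "B1 \<subseteq> vecs m1" and B2: "B2 \<subseteq> vecs m2" and A: "A \<subseteq> vecs n"
    and x0: "x0 \<in> B1" and y0: "y0 \<in> B2"
begin

definition Delta where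
  "Delta = {\<delta> \<in> B1 \<rightarrow>\<^sub>E (vecs n :: (nat \<Rightarrow> 'a) set). \<delta> x0 = (\<lambda>j. 0) \<and> (\<exists>c v. valid n m1 c v \<and> (\<forall>x\<in>B1. \<delta> x = aff c v m1 x))}"

definition Ad where
  "Ad \<delta> = {a \<in> vecs n. \<forall>x\<in>B1. (\<lambda>j. a j + \<delta> x j) \<in> A}"

lemma finB1: "finite B1" using B1 finite_vecs finite_subset by blast
lemma finB2: "finite B2" using B2 finite_vecs finite_subset by blast
lemma finA: "finite A" using A finite_vecs finite_subset by blast

lemma finDelta: "finite Delta"
proof -
  have "finite (B1 \<rightarrow>\<^sub>E (vecs n :: (nat \<Rightarrow> 'a) set))" by (rule finite_PiE[OF finB1 finite_vecs])
  then show ?thesis unfolding Delta_def by (rule finite_subset[rotated]) blast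
qed

lemma finAd: "finite (Ad \<delta>)"
  unfolding Ad_def using finite_vecs by (rule finite_subset[rotated]) blast

lemma Ad_sub: "Ad \<delta> \<subseteq> vecs n" unfolding Ad_def by blast

lemma L1: "card (homset m1 n B1 A) = (\<Sum>\<delta>\<in>Delta. card (Ad \<delta>))"
proof -
  define f where "f = (\<lambda>\<phi>::(nat \<Rightarrow> 'a) \<Rightarrow> (nat \<Rightarrow> 'a). (restrict (\<lambda>x j. \<phi> x j - \<phi> x0 j) B1, \<phi> x0))"
  define g where "g = (\<lambda>(\<delta>::(nat \<Rightarrow> 'a) \<Rightarrow> (nat \<Rightarrow> 'a), a::nat \<Rightarrow> 'a). restrict (\<lambda>x j. a j + \<delta> x j) B1)"
  have "bij_betw f (homset m1 n B1 A) (Sigma Delta Ad)"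
  proof (rule bij_betw_byWitness[where f'=g])
    show "\<forall>\<phi>\<in>homset m1 n B1 A. g (f \<phi>) = \<phi>"
    proof
      fix \<phi> assume "\<phi> \<in> homset m1 n B1 A"
      then have "\<phi> \<in> B1 \<rightarrow>\<^sub>E A" unfolding homset_def by blast
      show "g (f \<phi>) = \<phi>"
      proof (rule ext)
        fix x show "g (f \<phi>) x = \<phi> x"
        proof (cases "x \<in> B1")
          case True then show ?thesis by (simp add: f_def g_def x0)
        next
          case False
          have "\<phi> x = undefined" using PiE_arb[OF \<open>\<phi> \<in> B1 \<rightarrow>\<^sub>E A\<close> False] .
          moreover have "g (f \<phi>) x = undefined" unfolding g_def f_def using False by simp
          ultimately show ?thesis by simp
        qed
      qed
    qed
    show "\<forall>p\<in>Sigma Delta Ad. f (g p) = p"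
    proof
      fix p assume "p \<in> Sigma Delta Ad"
      then obtain \<delta> a where p: "p = (\<delta>, a)" "\<delta> \<in> Delta" by blast
      then have d: "\<delta> \<in> B1 \<rightarrow>\<^sub>E vecs n" "\<delta> x0 = (\<lambda>j. 0)" unfolding Delta_def by blast+
      have ga: "g p x0 = a" by (simp add: g_def p x0 d(2))
      have "restrict (\<lambda>x j. g p x j - g p x0 j) B1 = \<delta>"
      proof (rule ext)
        fix x show "restrict (\<lambda>x j. g p x j - g p x0 j) B1 x = \<delta> x"
        proof (cases "x \<in> B1")
          case True then show ?thesis by (simp add: ga) (simp add: g_def p)
        next
          case False
          have "\<delta> x = undefined" using PiE_arb[OF d(1) False] .
          then show ?thesis using False by simp
        qed
      qed
      then show "f (g p) = p" unfolding f_def using ga p(1) by simp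
    qed
    show "f ` homset m1 n B1 A \<subseteq> Sigma Delta Ad"
    proof (rule image_subsetI)
      fix \<phi> assume "\<phi> \<in> homset m1 n B1 A"
      then obtain c v where phi: "\<phi> \<in> B1 \<rightarrow>\<^sub>E A" "valid n m1 c v" "\<forall>x\<in>B1. \<phi> x = aff c v m1 x"
        unfolding homset_def by blast
      have phiv: "\<phi> x \<in> vecs n" if "x \<in> B1" for x using phi(1) that A by blast
      have "restrict (\<lambda>x j. \<phi> x j - \<phi> x0 j) B1 \<in> Delta"
        unfolding Delta_def
      proof (intro CollectI conjI exI)
        show "restrict (\<lambda>x j. \<phi> x j - \<phi> x0 j) B1 \<in> B1 \<rightarrow>\<^sub>E vecs n"
          using phiv x0 vecs_diff by (subst restrict_PiE_iff) blast
        show "restrict (\<lambda>x j. \<phi> x j - \<phi> x0 j) B1 x0 = (\<lambda>j. 0)" using x0 by simp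
        show "valid n m1 (\<lambda>j. c j - \<phi> x0 j) v"
          using phi(2) phiv[OF x0] vecs_diff unfolding valid_def by blast
        show "\<forall>x\<in>B1. restrict (\<lambda>x j. \<phi> x j - \<phi> x0 j) B1 x = aff (\<lambda>j. c j - \<phi> x0 j) v m1 x"
          using phi(3) by (simp add: aff_diff_const)
      qed
      moreover have "\<phi> x0 \<in> Ad (restrict (\<lambda>x j. \<phi> x j - \<phi> x0 j) B1)"
        unfolding Ad_def using phiv[OF x0] phi(1) by auto
      ultimately show "f \<phi> \<in> Sigma Delta Ad" unfolding f_def by blast
    qed
    show "g ` Sigma Delta Ad \<subseteq> homset m1 n B1 A"
    proof (rule image_subsetI)
      fix p assume "p \<in> Sigma Delta Ad"
      then obtain \<delta> a where p: "p = (\<delta>, a)" "\<delta> \<in> Delta" "a \<in> Ad \<delta>" by blast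
      then obtain c v where d: "valid n m1 c v" "\<forall>x\<in>B1. \<delta> x = aff c v m1 x" unfolding Delta_def by blast
      have a: "a \<in> vecs n" "\<forall>x\<in>B1. (\<lambda>j. a j + \<delta> x j) \<in> A" using p(3) unfolding Ad_def by blast+
      show "g p \<in> homset m1 n B1 A" unfolding homset_def
      proof (intro CollectI conjI exI)
        show "g p \<in> B1 \<rightarrow>\<^sub>E A" unfolding g_def p using a(2) by (simp add: restrict_PiE_iff)
        show "valid n m1 (\<lambda>j. a j + c j) v" using d(1) a(1) vecs_add unfolding valid_def by blast
        show "\<forall>x\<in>B1. g p x = aff (\<lambda>j. a j + c j) v m1 x"
          unfolding g_def p using d(2) by (simp add: aff_add_const)
      qed
    qed
  qed
  then have "card (homset m1 n B1 A) = card (Sigma Delta Ad)" by (rule bij_betw_same_card)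
  also have "\<dots> = (\<Sum>\<delta>\<in>Delta. card (Ad \<delta>))" using finDelta finAd by simp
  finally show ?thesis .
qed


definition P where "P = prod_set m1 B1 B2"
definition fst1 :: "(nat \<Rightarrow> 'a) \<Rightarrow> (nat \<Rightarrow> 'a)" where "fst1 p = (\<lambda>i. if i < m1 then p i else 0)"
definition snd2 :: "(nat \<Rightarrow> 'a) \<Rightarrow> (nat \<Rightarrow> 'a)" where "snd2 p = (\<lambda>i. p (i + m1))"

lemma join_P: "x \<in> B1 \<Longrightarrow> y \<in> B2 \<Longrightarrow> join m1 x y \<in> P"
  unfolding P_def prod_set_eq by (rule image_eqI[of _ _ "(x, y)"]) auto

lemma P_cases: "p \<in> P \<Longrightarrow> (\<And>x y. x \<in> B1 \<Longrightarrow> y \<in> B2 \<Longrightarrow> p = join m1 x y \<Longrightarrow> thesis) \<Longrightarrow> thesis"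
  unfolding P_def prod_set_eq by auto

lemma fst1_join: "x \<in> B1 \<Longrightarrow> fst1 (join m1 x y) = x"
  using B1 unfolding fst1_def join_def vecs_def by (auto simp: fun_eq_iff)

lemma snd2_join: "snd2 (join m1 x y) = y"
  unfolding snd2_def join_def by simp

lemma finP: "finite P" unfolding P_def prod_set_eq using finB1 finB2 by simp

lemma Phi_formula:
  assumes "\<forall>p\<in>P. \<Phi> p = aff c v (m1 + m2) p" "x \<in> B1" "y \<in> B2"
  shows "\<Phi> (join m1 x y) = (\<lambda>j. c j + (\<Sum>i<m1. x i * v i j) + (\<Sum>i<m2. y i * v (m1 + i) j))"
  using assms join_P aff_join by metis

lemma Phi_ident:
  assumes "\<forall>p\<in>P. \<Phi> p = aff c v (m1 + m2) p" "x \<in> B1" "y \<in> B2"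
  shows "\<Phi> (join m1 x y) j = \<Phi> (join m1 x0 y) j + (\<Phi> (join m1 x y0) j - \<Phi> (join m1 x0 y0) j)"
  using Phi_formula[OF assms(1)] assms(2,3) x0 y0 by (simp add: algebra_simps)

lemma L2: "card (homset (m1 + m2) n P A) = (\<Sum>\<delta>\<in>Delta. card (homset m2 n B2 (Ad \<delta>)))"
proof -
  define F where "F = (\<lambda>\<Phi>::(nat \<Rightarrow> 'a) \<Rightarrow> (nat \<Rightarrow> 'a).
     (restrict (\<lambda>x j. \<Phi> (join m1 x y0) j - \<Phi> (join m1 x0 y0) j) B1, restrict (\<lambda>y. \<Phi> (join m1 x0 y)) B2))"
  define G where "G = (\<lambda>(\<delta>::(nat \<Rightarrow> 'a) \<Rightarrow> (nat \<Rightarrow> 'a), \<psi>::(nat \<Rightarrow> 'a) \<Rightarrow> (nat \<Rightarrow> 'a)).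
     restrict (\<lambda>p j. \<psi> (snd2 p) j + \<delta> (fst1 p) j) P)"
  have "bij_betw F (homset (m1 + m2) n P A) (Sigma Delta (\<lambda>\<delta>. homset m2 n B2 (Ad \<delta>)))"
  proof (rule bij_betw_byWitness[where f'=G])
    show "\<forall>\<Phi>\<in>homset (m1 + m2) n P A. G (F \<Phi>) = \<Phi>"
    proof
      fix \<Phi> assume "\<Phi> \<in> homset (m1 + m2) n P A"
      then obtain c v where Ph: "\<Phi> \<in> P \<rightarrow>\<^sub>E A" "\<forall>p\<in>P. \<Phi> p = aff c v (m1 + m2) p"
        unfolding homset_def by blast
      show "G (F \<Phi>) = \<Phi>"
      proof (rule ext)
        fix p show "G (F \<Phi>) p = \<Phi> p"
        proof (cases "p \<in> P")
          case True
          then obtain x y where xy: "x \<in> B1" "y \<in> B2" "p = join m1 x y" by (rule P_cases)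
          show ?thesis
          proof (rule ext)
            fix j
            have "G (F \<Phi>) p j = \<Phi> (join m1 x0 y) j + (\<Phi> (join m1 x y0) j - \<Phi> (join m1 x0 y0) j)"
              unfolding G_def F_def using True xy by (simp add: fst1_join snd2_join)
            also have "\<dots> = \<Phi> p j" using Phi_ident[OF Ph(2) xy(1,2)] xy(3) by simp
            finally show "G (F \<Phi>) p j = \<Phi> p j" .
          qed
        next
          case False
          have "\<Phi> p = undefined" using PiE_arb[OF Ph(1) False] .
          moreover have "G (F \<Phi>) p = undefined" unfolding G_def F_def using False by simp
          ultimately show ?thesis by simp
        qed
      qed
    qed
    show "\<forall>q\<in>Sigma Delta (\<lambda>\<delta>. homset m2 n B2 (Ad \<delta>)). F (G q) = q"
    proof
      fix q assume "q \<in> Sigma Delta (\<lambda>\<delta>. homset m2 n B2 (Ad \<delta>))"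
      then obtain \<delta> \<psi> where q: "q = (\<delta>, \<psi>)" "\<delta> \<in> Delta" "\<psi> \<in> homset m2 n B2 (Ad \<delta>)" by blast
      then have d: "\<delta> \<in> B1 \<rightarrow>\<^sub>E vecs n" "\<delta> x0 = (\<lambda>j. 0)" unfolding Delta_def by blast+
      have ps: "\<psi> \<in> B2 \<rightarrow>\<^sub>E Ad \<delta>" using q(3) unfolding homset_def by blast
      have Gj: "G q (join m1 x y) = (\<lambda>j. \<psi> y j + \<delta> x j)" if "x \<in> B1" "y \<in> B2" for x y
        unfolding G_def q(1) using join_P[OF that] that by (simp add: fst1_join snd2_join)
      have "restrict (\<lambda>x j. G q (join m1 x y0) j - G q (join m1 x0 y0) j) B1 = \<delta>"
      proof (rule ext)
        fix x show "restrict (\<lambda>x j. G q (join m1 x y0) j - G q (join m1 x0 y0) j) B1 x = \<delta> x"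
        proof (cases "x \<in> B1")
          case True then show ?thesis using Gj[OF True y0] Gj[OF x0 y0] d(2) by simp
        next
          case False
          have "\<delta> x = undefined" using PiE_arb[OF d(1) False] .
          then show ?thesis using False by simp
        qed
      qed
      moreover have "restrict (\<lambda>y. G q (join m1 x0 y)) B2 = \<psi>"
      proof (rule ext)
        fix y show "restrict (\<lambda>y. G q (join m1 x0 y)) B2 y = \<psi> y"
        proof (cases "y \<in> B2")
          case True then show ?thesis using Gj[OF x0 True] d(2) by simp
        next
          case False
          have "\<psi> y = undefined" using PiE_arb[OF ps False] .
          then show ?thesis using False by simp
        qed
      qed
      ultimately show "F (G q) = q" unfolding F_def q(1) by simp
    qed
    show "F ` homset (m1 + m2) n P A \<subseteq> Sigma Delta (\<lambda>\<delta>. homset m2 n B2 (Ad \<delta>))"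
    proof (rule image_subsetI)
      fix \<Phi> assume "\<Phi> \<in> homset (m1 + m2) n P A"
      then obtain c v where Ph: "\<Phi> \<in> P \<rightarrow>\<^sub>E A" "valid n (m1 + m2) c v" "\<forall>p\<in>P. \<Phi> p = aff c v (m1 + m2) p"
        unfolding homset_def by blast
      have Phv: "\<Phi> (join m1 x y) \<in> A" if "x \<in> B1" "y \<in> B2" for x y
        using Ph(1) join_P[OF that] by blast
      have vn: "\<And>i j. i < m1 + m2 \<Longrightarrow> n \<le> j \<Longrightarrow> v i j = 0" using Ph(2) vecs_D unfolding valid_def by blast
      have cn: "\<And>j. n \<le> j \<Longrightarrow> c j = 0" using Ph(2) vecs_D unfolding valid_def by blast
      define \<delta> where "\<delta> = restrict (\<lambda>x j. \<Phi> (join m1 x y0) j - \<Phi> (join m1 x0 y0) j) B1"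
      define \<psi> where "\<psi> = restrict (\<lambda>y. \<Phi> (join m1 x0 y)) B2"
      have dD: "\<delta> \<in> Delta" unfolding Delta_def
      proof (intro CollectI conjI exI)
        show "\<delta> \<in> B1 \<rightarrow>\<^sub>E vecs n" unfolding \<delta>_def
          using Phv[OF _ y0] Phv[OF x0 y0] A vecs_diff by (subst restrict_PiE_iff) blast
        show "\<delta> x0 = (\<lambda>j. 0)" unfolding \<delta>_def using x0 by simp
        show "valid n m1 (\<lambda>j. - (\<Sum>i<m1. x0 i * v i j)) v"
          unfolding valid_def vecs_def using vn by auto
        show "\<forall>x\<in>B1. \<delta> x = aff (\<lambda>j. - (\<Sum>i<m1. x0 i * v i j)) v m1 x"
        proof
          fix x assume x: "x \<in> B1"
          show "\<delta> x = aff (\<lambda>j. - (\<Sum>i<m1. x0 i * v i j)) v m1 x"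
            unfolding \<delta>_def aff_def using x Phi_formula[OF Ph(3) x y0] Phi_formula[OF Ph(3) x0 y0]
            by (simp add: algebra_simps)
        qed
      qed
      have pH: "\<psi> \<in> homset m2 n B2 (Ad \<delta>)" unfolding homset_def
      proof (intro CollectI conjI exI)
        show "\<psi> \<in> B2 \<rightarrow>\<^sub>E Ad \<delta>" unfolding \<psi>_def restrict_PiE_iff
        proof
          fix y assume y: "y \<in> B2"
          show "\<Phi> (join m1 x0 y) \<in> Ad \<delta>" unfolding Ad_def
          proof (intro CollectI conjI ballI)
            show "\<Phi> (join m1 x0 y) \<in> vecs n" using Phv[OF x0 y] A by blast
            fix x assume x: "x \<in> B1"
            have "(\<lambda>j. \<Phi> (join m1 x0 y) j + \<delta> x j) = \<Phi> (join m1 x y)"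
              unfolding \<delta>_def using x Phi_ident[OF Ph(3) x y] by (simp add: fun_eq_iff)
            then show "(\<lambda>j. \<Phi> (join m1 x0 y) j + \<delta> x j) \<in> A" using Phv[OF x y] by simp
          qed
        qed
        show "valid n m2 (\<lambda>j. c j + (\<Sum>i<m1. x0 i * v i j)) (\<lambda>i. v (m1 + i))"
          unfolding valid_def vecs_def using vn cn by auto
        show "\<forall>y\<in>B2. \<psi> y = aff (\<lambda>j. c j + (\<Sum>i<m1. x0 i * v i j)) (\<lambda>i. v (m1 + i)) m2 y"
        proof
          fix y assume y: "y \<in> B2"
          show "\<psi> y = aff (\<lambda>j. c j + (\<Sum>i<m1. x0 i * v i j)) (\<lambda>i. v (m1 + i)) m2 y"
            unfolding \<psi>_def aff_def using y Phi_formula[OF Ph(3) x0 y] by simp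
        qed
      qed
      show "F \<Phi> \<in> Sigma Delta (\<lambda>\<delta>. homset m2 n B2 (Ad \<delta>))"
        unfolding F_def using dD pH unfolding \<delta>_def \<psi>_def by blast
    qed
    show "G ` Sigma Delta (\<lambda>\<delta>. homset m2 n B2 (Ad \<delta>)) \<subseteq> homset (m1 + m2) n P A"
    proof (rule image_subsetI)
      fix q assume "q \<in> Sigma Delta (\<lambda>\<delta>. homset m2 n B2 (Ad \<delta>))"
      then obtain \<delta> \<psi> where q: "q = (\<delta>, \<psi>)" "\<delta> \<in> Delta" "\<psi> \<in> homset m2 n B2 (Ad \<delta>)" by blast
      then obtain c1 v1 where d: "valid n m1 c1 v1" "\<forall>x\<in>B1. \<delta> x = aff c1 v1 m1 x" unfolding Delta_def by blast
      obtain c2 v2 where p: "\<psi> \<in> B2 \<rightarrow>\<^sub>E Ad \<delta>" "valid n m2 c2 v2" "\<forall>y\<in>B2. \<psi> y = aff c2 v2 m2 y"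
        using q(3) unfolding homset_def by blast
      have Gj: "G q (join m1 x y) = (\<lambda>j. \<psi> y j + \<delta> x j)" if "x \<in> B1" "y \<in> B2" for x y
        unfolding G_def q(1) using join_P[OF that] that by (simp add: fst1_join snd2_join)
      define V where "V = (\<lambda>i. if i < m1 then v1 i else v2 (i - m1))"
      show "G q \<in> homset (m1 + m2) n P A" unfolding homset_def
      proof (intro CollectI conjI exI)
        show "G q \<in> P \<rightarrow>\<^sub>E A"
        proof -
          have "\<forall>p\<in>P. (\<lambda>j. \<psi> (snd2 p) j + \<delta> (fst1 p) j) \<in> A"
          proof
            fix p assume "p \<in> P"
            then obtain x y where xy: "x \<in> B1" "y \<in> B2" "p = join m1 x y" by (rule P_cases)
            have "\<psi> y \<in> Ad \<delta>" using p(1) xy(2) by blast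
            then show "(\<lambda>j. \<psi> (snd2 p) j + \<delta> (fst1 p) j) \<in> A"
              unfolding Ad_def using xy by (simp add: fst1_join snd2_join)
          qed
          then show ?thesis unfolding G_def q(1) by (simp add: restrict_PiE_iff)
        qed
        show "valid n (m1 + m2) (\<lambda>j. c1 j + c2 j) V"
          using d(1) p(2) vecs_add unfolding valid_def V_def by auto
        show "\<forall>r\<in>P. G q r = aff (\<lambda>j. c1 j + c2 j) V (m1 + m2) r"
        proof
          fix r assume "r \<in> P"
          then obtain x y where xy: "x \<in> B1" "y \<in> B2" "r = join m1 x y" by (rule P_cases)
          have "aff (\<lambda>j. c1 j + c2 j) V (m1 + m2) r = (\<lambda>j. c1 j + c2 j + (\<Sum>i<m1. x i * v1 i j) + (\<Sum>i<m2. y i * v2 i j))"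
            unfolding xy(3) aff_join V_def by simp
          also have "\<dots> = (\<lambda>j. \<psi> y j + \<delta> x j)"
            using d(2) p(3) xy by (simp add: aff_def fun_eq_iff algebra_simps)
          also have "\<dots> = G q r" using Gj[OF xy(1,2)] xy(3) by simp
          finally show "G q r = aff (\<lambda>j. c1 j + c2 j) V (m1 + m2) r" by simp
        qed
      qed
    qed
  qed
  then have "card (homset (m1 + m2) n P A) = card (Sigma Delta (\<lambda>\<delta>. homset m2 n B2 (Ad \<delta>)))"
    by (rule bij_betw_same_card)
  also have "\<dots> = (\<Sum>\<delta>\<in>Delta. card (homset m2 n B2 (Ad \<delta>)))"
    using finDelta finB2 finAd by (simp add: finite_homset)
  finally show ?thesis .
qed

end


lemma aff_comb:
  assumes "finite S" "(\<Sum>s\<in>S. a s) = 1" "\<forall>i. (\<Sum>s\<in>S. a s * s i) = x i"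
  shows "aff c v m x j = (\<Sum>s\<in>S. a s * aff c v m s j)"
proof -
  have "(\<Sum>s\<in>S. a s * aff c v m s j) = (\<Sum>s\<in>S. a s * c j) + (\<Sum>s\<in>S. (\<Sum>i<m. a s * (s i * v i j)))"
    unfolding aff_def by (simp add: distrib_left sum.distrib sum_distrib_left)
  also have "(\<Sum>s\<in>S. a s * c j) = c j" using assms(2) by (simp flip: sum_distrib_right)
  also have "(\<Sum>s\<in>S. (\<Sum>i<m. a s * (s i * v i j))) = (\<Sum>i<m. (\<Sum>s\<in>S. a s * s i) * v i j)"
    by (subst sum.swap) (simp add: sum_distrib_right mult.assoc)
  also have "\<dots> = (\<Sum>i<m. x i * v i j)" using assms(3) by simp
  finally show ?thesis unfolding aff_def by simp
qed

context prodctx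
begin

lemma Delta_ne: "Delta \<noteq> {}"
proof -
  have "restrict (\<lambda>x j. 0) B1 \<in> Delta" unfolding Delta_def
  proof (intro CollectI conjI exI)
    show "restrict (\<lambda>x j. 0) B1 \<in> B1 \<rightarrow>\<^sub>E (vecs n :: (nat \<Rightarrow> 'a) set)"
      using vecs_zero by (subst restrict_PiE_iff) blast
    show "restrict (\<lambda>x j. 0::'a) B1 x0 = (\<lambda>j. 0)" using x0 by simp
    show "valid n m1 (\<lambda>j. 0::'a) (\<lambda>i j. 0)" unfolding valid_def vecs_def by simp
    show "\<forall>x\<in>B1. restrict (\<lambda>x j. 0::'a) B1 x = aff (\<lambda>j. 0) (\<lambda>i j. 0) m1 x"
      unfolding aff_def by simp
  qed
  then show ?thesis by blast
qed

lemma L3: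
  assumes S1: "S1 \<subseteq> B1" "x0 \<in> S1" "\<forall>x\<in>B1. inV S1 1 x" "finite S1"
  shows "card Delta \<le> card (vecs n :: (nat \<Rightarrow> 'a) set) ^ (card S1 - 1)"
proof -
  define R where "R = (\<lambda>\<delta>::(nat \<Rightarrow> 'a) \<Rightarrow> (nat \<Rightarrow> 'a). restrict \<delta> (S1 - {x0}))"
  have inj: "inj_on R Delta"
  proof (rule inj_onI)
    fix \<delta> \<delta>' assume d: "\<delta> \<in> Delta" and d': "\<delta>' \<in> Delta" and eq: "R \<delta> = R \<delta>'"
    obtain c v where dc: "\<delta> \<in> B1 \<rightarrow>\<^sub>E vecs n" "\<delta> x0 = (\<lambda>j. 0)" "\<forall>x\<in>B1. \<delta> x = aff c v m1 x"
      using d unfolding Delta_def by blast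
    obtain c' v' where dc': "\<delta>' \<in> B1 \<rightarrow>\<^sub>E vecs n" "\<delta>' x0 = (\<lambda>j. 0)" "\<forall>x\<in>B1. \<delta>' x = aff c' v' m1 x"
      using d' unfolding Delta_def by blast
    have onS: "\<delta> s = \<delta>' s" if "s \<in> S1" for s
    proof (cases "s = x0")
      case True then show ?thesis using dc(2) dc'(2) by simp
    next
      case False
      then have "R \<delta> s = \<delta> s" "R \<delta>' s = \<delta>' s" using that unfolding R_def by simp_all
      then show ?thesis using eq by simp
    qed
    show "\<delta> = \<delta>'"
    proof (rule ext)
      fix x show "\<delta> x = \<delta>' x"
      proof (cases "x \<in> B1")
        case True
        then obtain a where a: "(\<Sum>s\<in>S1. a s) = 1" "\<forall>i. (\<Sum>s\<in>S1. a s * s i) = x i"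
          using S1(3) unfolding inV_def by blast
        show ?thesis
        proof (rule ext)
          fix j
          have "\<delta> x j = (\<Sum>s\<in>S1. a s * \<delta> s j)"
            using dc(3) True S1(1) aff_comb[OF S1(4) a] by (simp add: subset_iff)
          also have "\<dots> = (\<Sum>s\<in>S1. a s * \<delta>' s j)" using onS by simp
          also have "\<dots> = \<delta>' x j"
            using dc'(3) True S1(1) aff_comb[OF S1(4) a] by (simp add: subset_iff)
          finally show "\<delta> x j = \<delta>' x j" .
        qed
      next
        case False
        have "\<delta> x = undefined" using PiE_arb[OF dc(1) False] .
        moreover have "\<delta>' x = undefined" using PiE_arb[OF dc'(1) False] .
        ultimately show ?thesis by simp
      qed
    qed
  qed
  have sub: "R ` Delta \<subseteq> (S1 - {x0}) \<rightarrow>\<^sub>E (vecs n :: (nat \<Rightarrow> 'a) set)"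
  proof (rule image_subsetI)
    fix \<delta> assume "\<delta> \<in> Delta"
    then have "\<delta> \<in> B1 \<rightarrow>\<^sub>E vecs n" unfolding Delta_def by blast
    then have "\<forall>s\<in>S1 - {x0}. \<delta> s \<in> vecs n" using S1(1) by blast
    then show "R \<delta> \<in> (S1 - {x0}) \<rightarrow>\<^sub>E vecs n" unfolding R_def by (subst restrict_PiE_iff) blast
  qed
  have "card Delta = card (R ` Delta)" using card_image[OF inj] by simp
  also have "\<dots> \<le> card ((S1 - {x0}) \<rightarrow>\<^sub>E (vecs n :: (nat \<Rightarrow> 'a) set))"
    by (rule card_mono[OF _ sub]) (rule finite_PiE, use S1(4) in simp, rule finite_vecs)
  also have "\<dots> = card (vecs n :: (nat \<Rightarrow> 'a) set) ^ (card S1 - 1)"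
    using S1(2,4) by (simp add: card_PiE)
  finally show ?thesis .
qed

end


lemma inV_cong: "inV W a z \<Longrightarrow> a = a' \<Longrightarrow> (\<And>i. z i = z' i) \<Longrightarrow> inV W a' z'"
proof -
  assume "inV W a z" "a = a'" "\<And>i. z i = z' i"
  moreover have "z = z'" using \<open>\<And>i. z i = z' i\<close> by (rule ext)
  ultimately show ?thesis by simp
qed

context prodctx
begin

lemma Prank:
  assumes S1: "S1 \<subseteq> B1" "x0 \<in> S1" "\<forall>x\<in>B1. inV S1 1 x" "finite S1"
    and S2: "S2 \<subseteq> B2" "y0 \<in> S2" "\<forall>y\<in>B2. inV S2 1 y" "finite S2"
  shows "rank_aff P \<le> card S1 + card S2 - 1"
proof -
  define W1 where "W1 = (\<lambda>s. join m1 s y0) ` S1"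
  define W2 where "W2 = (\<lambda>t. join m1 x0 t) ` S2"
  define W where "W = W1 \<union> W2"
  have fW1: "finite W1" unfolding W1_def using S1(4) by simp
  have fW2: "finite W2" unfolding W2_def using S2(4) by simp
  have fW: "finite W" unfolding W_def using fW1 fW2 by simp
  have "join m1 x0 y0 \<in> W1 \<inter> W2" unfolding W1_def W2_def using S1(2) S2(2) by blast
  then have "card (W1 \<inter> W2) \<ge> 1" using fW1
    by (metis One_nat_def Suc_leI card_gt_0_iff empty_iff finite_Int)
  moreover have "card W + card (W1 \<inter> W2) = card W1 + card W2"
    unfolding W_def using card_Un_Int[OF fW1 fW2] by simp
  moreover have "card W1 \<le> card S1" unfolding W1_def by (rule card_image_le[OF S1(4)])
  moreover have "card W2 \<le> card S2" unfolding W2_def by (rule card_image_le[OF S2(4)])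
  ultimately have cW: "card W \<le> card S1 + card S2 - 1" by linarith
  have inW: "inV W 1 p" if "p \<in> P" for p
  proof -
    obtain x y where xy: "x \<in> B1" "y \<in> B2" "p = join m1 x y" using \<open>p \<in> P\<close> by (rule P_cases)
    obtain a where a: "(\<Sum>s\<in>S1. a s) = 1" "\<forall>i. (\<Sum>s\<in>S1. a s * s i) = x i"
      using S1(3) xy(1) unfolding inV_def by blast
    obtain b where b: "(\<Sum>s\<in>S2. b s) = 1" "\<forall>i. (\<Sum>s\<in>S2. b s * s i) = y i"
      using S2(3) xy(2) unfolding inV_def by blast
    have "inV W (\<Sum>s\<in>S1. a s * 1) (\<lambda>i. \<Sum>s\<in>S1. a s * join m1 s y0 i)"
      using S1(4) by (rule inV_sum) (rule inV_scale, rule inV_gen[OF fW], auto simp: W_def W1_def)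
    then have h1: "inV W 1 (join m1 x y0)"
    proof (rule inV_cong)
      show "(\<Sum>s\<in>S1. a s * 1) = 1" using a(1) by simp
      fix i show "(\<Sum>s\<in>S1. a s * join m1 s y0 i) = join m1 x y0 i"
        using a by (simp add: join_def flip: sum_distrib_right)
    qed
    have "inV W (\<Sum>s\<in>S2. b s * 1) (\<lambda>i. \<Sum>s\<in>S2. b s * join m1 x0 s i)"
      using S2(4) by (rule inV_sum) (rule inV_scale, rule inV_gen[OF fW], auto simp: W_def W2_def)
    then have h2: "inV W 1 (join m1 x0 y)"
    proof (rule inV_cong)
      show "(\<Sum>s\<in>S2. b s * 1) = 1" using b(1) by simp
      fix i show "(\<Sum>s\<in>S2. b s * join m1 x0 s i) = join m1 x0 y i"
        using b by (simp add: join_def flip: sum_distrib_right)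
    qed
    have h3: "inV W 1 (join m1 x0 y0)" using fW \<open>join m1 x0 y0 \<in> W1 \<inter> W2\<close> inV_gen unfolding W_def by blast
    have "inV W (1 + 1 + (-1) * 1) (\<lambda>i. join m1 x y0 i + join m1 x0 y i + (-1) * join m1 x0 y0 i)"
      by (rule inV_add[OF inV_add[OF h1 h2] inV_scale[OF h3]])
    then show "inV W 1 p"
      by (rule inV_cong) (auto simp: xy(3) join_def)
  qed
  have "rank_aff P \<le> card W"
  proof (rule rank_le[OF finP])
    fix T assume "T \<subseteq> P" "aff_indep T"
    then show "card T \<le> card W" using indep_card_le[OF fW] inW by blast
  qed
  then show ?thesis using cW by simp
qed

end


lemma convex_powr0:
  assumes p: "p \<ge> (1::real)"
  shows "convex_on {0..} (\<lambda>x::real. x powr p)"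
proof (rule convex_on_linorderI)
  fix t x y :: real
  assume t: "t > 0" "t < 1" and x: "x \<in> {0..}" and y: "y \<in> {0..}" and xy: "x < y"
  show "((1 - t) *\<^sub>R x + t *\<^sub>R y) powr p \<le> (1 - t) * x powr p + t * y powr p"
  proof (cases "x = 0")
    case True
    have "t powr p \<le> t powr 1" using t p by (intro powr_mono') auto
    then have "t powr p \<le> t" using t by simp
    then have "t powr p * y powr p \<le> t * y powr p" by (intro mult_right_mono) auto
    then show ?thesis using True t y p by (simp add: powr_mult)
  next
    case False
    then have "x \<in> {0<..}" "y \<in> {0<..}" using x xy by auto
    then show ?thesis using convex_onD[OF powr_convex[OF p], of t x y] t by simp
  qed
qed (simp add: convex_real_interval)

lemma jensen_powr:
  fixes X :: "'b \<Rightarrow> real"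
  assumes "finite D" "D \<noteq> {}" "\<And>d. d \<in> D \<Longrightarrow> X d \<ge> 0" "p \<ge> 1"
  shows "real (card D) * ((\<Sum>d\<in>D. X d) / real (card D)) powr p \<le> (\<Sum>d\<in>D. X d powr p)"
proof -
  have cD: "real (card D) > 0" using assms(1,2) by (simp add: card_gt_0_iff)
  have "((\<Sum>d\<in>D. (1 / real (card D)) *\<^sub>R X d)) powr p \<le> (\<Sum>d\<in>D. (1 / real (card D)) * X d powr p)"
    using assms(1,2) convex_powr0[OF assms(4)]
    by (rule convex_on_sum) (use assms(1,3) cD in auto)
  moreover have "(\<Sum>d\<in>D. (1 / real (card D)) *\<^sub>R X d) = (\<Sum>d\<in>D. X d) / real (card D)"
    by (simp add: sum_divide_distrib)
  moreover have "(\<Sum>d\<in>D. (1 / real (card D)) * X d powr p) = (\<Sum>d\<in>D. X d powr p) / real (card D)"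
    by (simp add: sum_divide_distrib)
  ultimately have "((\<Sum>d\<in>D. X d) / real (card D)) powr p \<le> (\<Sum>d\<in>D. X d powr p) / real (card D)" by simp
  then show ?thesis using cD by (simp add: field_simps)
qed

lemma final_ineq:
  fixes N a C1 C2 hP :: real and r1 r2 rP :: nat and X :: "'b \<Rightarrow> real"
  assumes N: "N \<ge> 1" and D: "finite D" "D \<noteq> {}" and lD: "real (card D) \<le> N ^ (r1 - 1)"
    and r1: "r1 \<ge> 1" and C2: "C2 \<ge> 1" and a: "a \<ge> 0"
    and X: "\<And>d. d \<in> D \<Longrightarrow> X d \<ge> 0"
    and H1: "(\<Sum>d\<in>D. X d) * N \<ge> a powr C1 * N ^ r1"
    and HP: "hP \<ge> (\<Sum>d\<in>D. X d powr C2 * N ^ r2)"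
    and rP: "rP \<le> r1 + r2 - 1"
  shows "hP \<ge> a powr (C1 * C2) * N ^ rP"
proof -
  define l where "l = real (card D)"
  define M where "M = N ^ (r1 - 1)"
  have l1: "l \<ge> 1" using D unfolding l_def by (simp add: Suc_leI card_gt_0_iff)
  have Npos: "N > 0" using N by simp
  have NM: "N ^ r1 = N * M" unfolding M_def using r1 by (metis Suc_diff_1 less_le_trans power_Suc zero_less_one)
  have lM: "l \<le> M" using lD unfolding l_def M_def .
  have S: "(\<Sum>d\<in>D. X d) \<ge> a powr C1 * M" using H1 Npos NM
    by (metis mult.left_commute mult_le_cancel_left_pos mult.commute)
  have "hP \<ge> (\<Sum>d\<in>D. X d powr C2) * N ^ r2" using HP by (simp add: sum_distrib_right)
  moreover have "(\<Sum>d\<in>D. X d powr C2) \<ge> l * ((\<Sum>d\<in>D. X d) / l) powr C2"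
    unfolding l_def using jensen_powr[OF D X C2] by simp
  moreover have "((\<Sum>d\<in>D. X d) / l) powr C2 \<ge> (a powr C1 * (M / l)) powr C2"
  proof (rule powr_mono2)
    have "M \<ge> 0" unfolding M_def using N by simp
    then show "0 \<le> a powr C1 * (M / l)" using l1 by simp
    show "a powr C1 * (M / l) \<le> (\<Sum>d\<in>D. X d) / l" using S l1 by (simp add: divide_right_mono)
  qed (use C2 in simp)
  moreover have "(a powr C1 * (M / l)) powr C2 = a powr (C1 * C2) * (M / l) powr C2"
  proof -
    have "0 \<le> M / l" using l1 lM by simp
    then have "(a powr C1 * (M / l)) powr C2 = (a powr C1) powr C2 * (M / l) powr C2"
      by (intro powr_mult)
    then show ?thesis by (simp add: powr_powr)
  qed
  moreover have "(M / l) powr C2 \<ge> M / l"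
  proof -
    have "M / l \<ge> 1" using l1 lM by simp
    then have "(M / l) powr 1 \<le> (M / l) powr C2" using C2 by (intro powr_mono) auto
    moreover have "(M / l) powr 1 = M / l" using \<open>M / l \<ge> 1\<close> by (simp only: powr_one_gt_zero_iff)
    ultimately show ?thesis by simp
  qed
  ultimately have "hP \<ge> l * (a powr (C1 * C2) * (M / l)) * N ^ r2"
  proof -
    assume h: "hP \<ge> (\<Sum>d\<in>D. X d powr C2) * N ^ r2"
      "(\<Sum>d\<in>D. X d powr C2) \<ge> l * ((\<Sum>d\<in>D. X d) / l) powr C2"
      "((\<Sum>d\<in>D. X d) / l) powr C2 \<ge> (a powr C1 * (M / l)) powr C2"
      "(a powr C1 * (M / l)) powr C2 = a powr (C1 * C2) * (M / l) powr C2"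
      "(M / l) powr C2 \<ge> M / l"
    have "l * (a powr (C1 * C2) * (M / l)) \<le> l * (a powr (C1 * C2) * (M / l) powr C2)"
      using h(5) l1 by (intro mult_left_mono) auto
    also have "\<dots> \<le> l * ((\<Sum>d\<in>D. X d) / l) powr C2" using h(3,4) l1 by simp
    also have "\<dots> \<le> (\<Sum>d\<in>D. X d powr C2)" using h(2) .
    finally have "l * (a powr (C1 * C2) * (M / l)) * N ^ r2 \<le> (\<Sum>d\<in>D. X d powr C2) * N ^ r2"
      using Npos by (intro mult_right_mono) auto
    then show ?thesis using h(1) by linarith
  qed
  moreover have "l * (a powr (C1 * C2) * (M / l)) * N ^ r2 = a powr (C1 * C2) * N ^ (r1 - 1 + r2)"
    using l1 unfolding M_def by (simp add: power_add)
  moreover have "N ^ rP \<le> N ^ (r1 - 1 + r2)" using N rP r1 by (intro power_increasing) auto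
  ultimately show ?thesis
    by (smt (verit, best) mult_left_mono powr_ge_zero)
qed


lemma homset_single:
  fixes B :: "(nat \<Rightarrow> 'a::field) set"
  shows "homset m 1 B {(\<lambda>j. 0)} = {restrict (\<lambda>x j. 0) B}"
proof
  show "homset m 1 B {(\<lambda>j. 0)} \<subseteq> {restrict (\<lambda>x j. 0) B}"
  proof
    fix \<phi> assume "\<phi> \<in> homset m 1 B {(\<lambda>j. 0)}"
    then have ph: "\<phi> \<in> B \<rightarrow>\<^sub>E {(\<lambda>j. 0)}" unfolding homset_def by blast
    have "\<phi> = restrict (\<lambda>x j. 0) B"
    proof (rule ext)
      fix x show "\<phi> x = restrict (\<lambda>x j. 0) B x"
      proof (cases "x \<in> B")
        case True then show ?thesis using ph by auto
      next
        case False
        have "\<phi> x = undefined" using PiE_arb[OF ph False] .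
        then show ?thesis using False by simp
      qed
    qed
    then show "\<phi> \<in> {restrict (\<lambda>x j. 0) B}" by simp
  qed
  show "{restrict (\<lambda>x j. 0) B} \<subseteq> homset m 1 B {(\<lambda>j. 0)}"
  proof -
    have "restrict (\<lambda>x j. 0) B \<in> homset m 1 B {(\<lambda>j. 0)}" unfolding homset_def
    proof (intro CollectI conjI exI)
      show "restrict (\<lambda>x j. 0) B \<in> B \<rightarrow>\<^sub>E {(\<lambda>j. 0::'a)}" by (subst restrict_PiE_iff) blast
      show "valid 1 m (\<lambda>j. 0::'a) (\<lambda>i j. 0)" unfolding valid_def vecs_def by simp
      show "\<forall>x\<in>B. restrict (\<lambda>x j. 0) B x = aff (\<lambda>j. 0::'a) (\<lambda>i j. 0) m x" unfolding aff_def by simp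
    qed
    then show ?thesis by simp
  qed
qed

lemma ws_C:
  fixes B :: "(nat \<Rightarrow> 'a::{finite,field}) set"
  assumes B: "B \<subseteq> vecs m" and ws: "weakly_sidorenko C m B"
  shows "C \<ge> real (rank_aff B)"
proof -
  define q where "q = real (card (UNIV :: 'a set))"
  have q2: "q \<ge> 2" unfolding q_def using card_ge2[where 'a='a] by simp
  have A: "{(\<lambda>j. 0)} \<subseteq> (vecs 1 :: (nat \<Rightarrow> 'a) set)" unfolding vecs_def by simp
  have "hom_aff m 1 B {(\<lambda>j. 0::'a)} = card (homset m 1 B {(\<lambda>j. 0::'a)})" by (rule hom_aff_eq[OF B])
  also have "\<dots> = 1" unfolding homset_single by simp
  finally have "hom_aff m 1 B {(\<lambda>j. 0::'a)} = 1" .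
  moreover have "real (hom_aff m 1 B {(\<lambda>j. 0::'a)}) \<ge> (1 / q) powr C * q ^ rank_aff B"
    using ws[unfolded weakly_sidorenko_def, rule_format, OF A] unfolding Let_def q_def by simp
  ultimately have "1 \<ge> (1 / q) powr C * q ^ rank_aff B" by simp
  moreover have "(1 / q) powr C = 1 / q powr C" using q2 by (simp add: powr_divide)
  ultimately have "q ^ rank_aff B \<le> q powr C" using q2 by (simp add: field_simps)
  then have "q powr real (rank_aff B) \<le> q powr C" using q2 by (simp add: powr_realpow)
  then show ?thesis using q2 by simp
qed

lemma join_vecs: "x \<in> vecs m1 \<Longrightarrow> y \<in> vecs m2 \<Longrightarrow> join m1 x y \<in> vecs (m1 + m2)"
  unfolding vecs_def join_def by auto

lemma prod_set_vecs:
  assumes "B1 \<subseteq> vecs m1" "B2 \<subseteq> vecs m2"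
  shows "prod_set m1 B1 B2 \<subseteq> vecs (m1 + m2)"
proof
  fix p assume "p \<in> prod_set m1 B1 B2"
  then have "\<exists>x\<in>B1. \<exists>y\<in>B2. p = join m1 x y" unfolding prod_set_eq by auto
  then obtain x y where "x \<in> B1" "y \<in> B2" "p = join m1 x y" by blast
  then show "p \<in> vecs (m1 + m2)" using assms join_vecs by blast
qed

lemma card_prod_set:
  assumes B1: "B1 \<subseteq> vecs m1" and B2: "B2 \<subseteq> vecs m2"
  shows "card (prod_set m1 B1 B2) = card B1 * card B2"
proof -
  have "inj_on (\<lambda>(x, y). join m1 x y) (B1 \<times> B2)"
  proof (rule inj_onI, clarify)
    fix x y x' y' assume xy: "x \<in> B1" "y \<in> B2" "x' \<in> B1" "y' \<in> B2" and eq: "join m1 x y = join m1 x' y'"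
    show "x = x' \<and> y = y'"
    proof
      show "x = x'"
      proof (rule ext)
        fix i show "x i = x' i"
        proof (cases "i < m1")
          case True then show ?thesis using fun_cong[OF eq, of i] by (simp add: join_def)
        next
          case False
          have "x \<in> vecs m1" "x' \<in> vecs m1" using xy(1,3) B1 by blast+
          then show ?thesis using False vecs_D[of x m1 i] vecs_D[of x' m1 i] by simp
        qed
      qed
      show "y = y'"
      proof (rule ext)
        fix i show "y i = y' i" using fun_cong[OF eq, of "i + m1"] by (simp add: join_def)
      qed
    qed
  qed
  then show ?thesis unfolding prod_set_eq by (simp add: card_image card_cartesian_product)
qed

lemma homset_empty: "homset m n {} A = {(\<lambda>x. undefined)}"
proof -
  have "valid n m (\<lambda>j. 0) (\<lambda>i j. 0)" unfolding valid_def vecs_def by simp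
  then have ex: "\<exists>c v. valid n m c v" by blast
  show ?thesis unfolding homset_def PiE_empty_domain
  proof (rule set_eqI)
    fix \<phi> :: "(nat \<Rightarrow> 'a) \<Rightarrow> (nat \<Rightarrow> 'a)"
    show "\<phi> \<in> {\<phi> \<in> {\<lambda>x. undefined}. \<exists>c v. valid n m c v \<and> (\<forall>x\<in>{}. \<phi> x = aff c v m x)} \<longleftrightarrow> \<phi> \<in> {\<lambda>x. undefined}"
      using ex by (simp only: mem_Collect_eq singleton_iff ball_empty simp_thms) blast
  qed
qed

lemma main_ws:
  fixes B1 B2 :: "(nat \<Rightarrow> 'a::{finite,field}) set"
  assumes B1: "B1 \<subseteq> vecs m1" and B2: "B2 \<subseteq> vecs m2"
    and ws1: "weakly_sidorenko C1 m1 B1" and ws2: "weakly_sidorenko C2 m2 B2"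
  shows "weakly_sidorenko (C1 * C2) (m1 + m2) (prod_set m1 B1 B2)"
  unfolding weakly_sidorenko_def Let_def
proof (intro allI impI)
  fix n and A :: "(nat \<Rightarrow> 'a) set"
  assume A: "A \<subseteq> vecs n"
  define N where "N = real (card (UNIV :: 'a set)) ^ n"
  define a where "a = real (card A) / N"
  have q2: "real (card (UNIV :: 'a set)) \<ge> 2" using card_ge2[where 'a='a] by simp
  have N1: "N \<ge> 1" unfolding N_def using q2 by (simp add: one_le_power)
  have cv: "real (card (vecs n :: (nat \<Rightarrow> 'a) set)) = N" unfolding N_def by (simp add: card_vecs)
  have a0: "a \<ge> 0" unfolding a_def using N1 by simp
  have a1: "a \<le> 1"
  proof -
    have "card A \<le> card (vecs n :: (nat \<Rightarrow> 'a) set)" by (rule card_mono[OF finite_vecs A])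
    then have "real (card A) \<le> N" using cv by linarith
    then show ?thesis unfolding a_def using N1 by simp
  qed
  have C1r: "C1 \<ge> real (rank_aff B1)" by (rule ws_C[OF B1 ws1])
  have C2r: "C2 \<ge> real (rank_aff B2)" by (rule ws_C[OF B2 ws2])
  have WS: "real (hom_aff m n B (A' :: (nat \<Rightarrow> 'a) set)) \<ge> (real (card A') / N) powr C * N ^ rank_aff B"
    if "weakly_sidorenko C m B" "A' \<subseteq> vecs n" for C m B A'
    using that(1)[unfolded weakly_sidorenko_def, rule_format, OF that(2)] unfolding Let_def N_def .
  have key: "a powr (C1 * C2) * N ^ rank_aff (prod_set m1 B1 B2)
        \<le> real (hom_aff (m1 + m2) n (prod_set m1 B1 B2) A)"
  proof (cases "B1 = {} \<or> B2 = {}")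
    case True
    then have Pe: "prod_set m1 B1 B2 = {}" unfolding prod_set_eq by auto
    have "hom_aff (m1 + m2) n (prod_set m1 B1 B2) A = 1"
      unfolding Pe by (subst hom_aff_eq) (simp_all add: homset_empty)
    moreover have "a powr (C1 * C2) \<le> 1"
    proof -
      have "C1 \<ge> 0" "C2 \<ge> 0" using C1r C2r by linarith+
      then have "a powr (C1 * C2) \<le> 1 powr (C1 * C2)" using a0 a1 by (intro powr_mono2) auto
      then show ?thesis by simp
    qed
    ultimately show ?thesis unfolding Pe rank_empty by simp
  next
    case False
    then have ne: "B1 \<noteq> {}" "B2 \<noteq> {}" by auto
    have fB1: "finite B1" using B1 finite_vecs finite_subset by blast
    have fB2: "finite B2" using B2 finite_vecs finite_subset by blast
    obtain S1 where S1: "S1 \<subseteq> B1" "aff_indep S1" "card S1 = rank_aff B1" "\<forall>x\<in>B1. inV S1 1 x"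
      using rank_basis[OF fB1] by blast
    obtain S2 where S2: "S2 \<subseteq> B2" "aff_indep S2" "card S2 = rank_aff B2" "\<forall>x\<in>B2. inV S2 1 x"
      using rank_basis[OF fB2] by blast
    have r1: "rank_aff B1 \<ge> 1" using ne(1) rank_ge1[OF fB1] by blast
    have r2: "rank_aff B2 \<ge> 1" using ne(2) rank_ge1[OF fB2] by blast
    have fS1: "finite S1" using S1(2) by (rule aff_indep_finite)
    have fS2: "finite S2" using S2(2) by (rule aff_indep_finite)
    obtain x0 where x0: "x0 \<in> S1" using S1(3) r1 by (metis card.empty ex_in_conv not_one_le_zero)
    obtain y0 where y0: "y0 \<in> S2" using S2(3) r2 by (metis card.empty ex_in_conv not_one_le_zero)
    interpret ctx: prodctx m1 m2 n B1 B2 A x0 y0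
      by unfold_locales (use B1 B2 A x0 y0 S1(1) S2(1) in auto)
    have Peq: "ctx.P = prod_set m1 B1 B2" by (rule ctx.P_def)
    have C2_1: "C2 \<ge> 1" using C2r r2 by linarith
    have rP: "rank_aff ctx.P \<le> rank_aff B1 + rank_aff B2 - 1"
      using ctx.Prank[OF S1(1) x0 S1(4) fS1 S2(1) y0 S2(4) fS2] S1(3) S2(3) by simp
    have lD: "real (card ctx.Delta) \<le> N ^ (rank_aff B1 - 1)"
    proof -
      have "card ctx.Delta \<le> card (vecs n :: (nat \<Rightarrow> 'a) set) ^ (card S1 - 1)"
        by (rule ctx.L3[OF S1(1) x0 S1(4) fS1])
      then have "real (card ctx.Delta) \<le> real (card (vecs n :: (nat \<Rightarrow> 'a) set)) ^ (card S1 - 1)"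
        by (metis of_nat_le_iff of_nat_power)
      then show ?thesis using cv S1(3) by simp
    qed
    define X where "X = (\<lambda>\<delta>. real (card (ctx.Ad \<delta>)) / N)"
    have X0: "\<And>d. d \<in> ctx.Delta \<Longrightarrow> X d \<ge> 0" unfolding X_def using N1 by simp
    have H1: "(\<Sum>d\<in>ctx.Delta. X d) * N \<ge> a powr C1 * N ^ rank_aff B1"
    proof -
      have "(\<Sum>d\<in>ctx.Delta. X d) * N = real (\<Sum>d\<in>ctx.Delta. card (ctx.Ad d))"
      proof -
        have "(\<Sum>d\<in>ctx.Delta. X d) * N = (\<Sum>d\<in>ctx.Delta. X d * N)" by (rule sum_distrib_right)
        also have "\<dots> = (\<Sum>d\<in>ctx.Delta. real (card (ctx.Ad d)))"
          by (rule sum.cong) (use N1 in \<open>simp_all add: X_def\<close>)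
        also have "\<dots> = real (\<Sum>d\<in>ctx.Delta. card (ctx.Ad d))" by (rule of_nat_sum[symmetric])
        finally show ?thesis .
      qed
      also have "\<dots> = real (hom_aff m1 n B1 A)" using ctx.L1 hom_aff_eq[OF B1] by simp
      also have "\<dots> \<ge> a powr C1 * N ^ rank_aff B1" unfolding a_def using WS[OF ws1 A] .
      finally show ?thesis .
    qed
    have HP: "real (hom_aff (m1 + m2) n (prod_set m1 B1 B2) A) \<ge> (\<Sum>d\<in>ctx.Delta. X d powr C2 * N ^ rank_aff B2)"
    proof -
      have "real (hom_aff (m1 + m2) n (prod_set m1 B1 B2) A) = (\<Sum>d\<in>ctx.Delta. real (hom_aff m2 n B2 (ctx.Ad d)))"
        using hom_aff_eq[OF prod_set_vecs[OF B1 B2]] ctx.L2 hom_aff_eq[OF B2] Peq by simp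
      also have "\<dots> \<ge> (\<Sum>d\<in>ctx.Delta. X d powr C2 * N ^ rank_aff B2)"
        unfolding X_def by (rule sum_mono) (rule WS[OF ws2 ctx.Ad_sub])
      finally show ?thesis .
    qed
    show ?thesis
      using final_ineq[OF N1 ctx.finDelta ctx.Delta_ne lD r1 C2_1 a0 X0 H1 HP] rP Peq by simp
  qed
  then show "(real (card A) / real (card (UNIV :: 'a set)) ^ n) powr (C1 * C2) * (real (card (UNIV :: 'a set)) ^ n) ^ rank_aff (prod_set m1 B1 B2)
        \<le> real (hom_aff (m1 + m2) n (prod_set m1 B1 B2) A)"
    unfolding a_def N_def .
qed


theorem theorem1p12:
  fixes B1 B2 :: "(nat \<Rightarrow> 'a::{finite,field}) set" and m1 m2 :: nat
  assumes "B1 \<subseteq> vecs m1" and "B2 \<subseteq> vecs m2"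
  shows "(\<forall>C1 C2. weakly_sidorenko C1 m1 B1 \<and> weakly_sidorenko C2 m2 B2 \<longrightarrow>
            weakly_sidorenko (C1 * C2) (m1 + m2) (prod_set m1 B1 B2))
       \<and> (sidorenko m1 B1 \<and> sidorenko m2 B2 \<longrightarrow> sidorenko (m1 + m2) (prod_set m1 B1 B2))"
proof (intro conjI allI impI)
  fix C1 C2 assume h: "weakly_sidorenko C1 m1 B1 \<and> weakly_sidorenko C2 m2 B2"
  show "weakly_sidorenko (C1 * C2) (m1 + m2) (prod_set m1 B1 B2)"
    using main_ws[OF assms] h by blast
next
  assume h: "sidorenko m1 B1 \<and> sidorenko m2 B2"
  then have "weakly_sidorenko (real (card B1)) m1 B1" "weakly_sidorenko (real (card B2)) m2 B2"
    unfolding sidorenko_def by blast+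
  then have "weakly_sidorenko (real (card B1) * real (card B2)) (m1 + m2) (prod_set m1 B1 B2)"
    by (rule main_ws[OF assms])
  moreover have "real (card (prod_set m1 B1 B2)) = real (card B1) * real (card B2)"
    using card_prod_set[OF assms] by simp
  ultimately show "sidorenko (m1 + m2) (prod_set m1 B1 B2)"
    unfolding sidorenko_def by simp
qed

end
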